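(* Let $G$ be a finite group, $k$ a field of characteristic $p$ dividing $|G|$. The constant presheaf $\underline{k^{\times}}$ on $\mathcal{O}(G)$ is a sheaf on the site $(\mathcal{O}(G),\mathcal{J}_{\rm sipp})$.
   Context: $\mathcal{O}(G)$ is the category of orbits $G/H$ ($H\le G$) and $G$-maps. $k^\times$ is the multiplicative group of $k$, and $\underline{k^\times}$ the constant presheaf with all restriction maps the identity. A sieve on $x$ is a set of morphisms with codomain $x$ closed under precomposition. $\mathcal{J}_{\rm sipp}$: a sieve on $G/H$ is covering iff it contains the projection $G/P_H\to G/H$, $gP_H\mapsto gH$, for a Sylow $p$-subgroup $P_H$ of $H$. A presheaf $\mathfrak{F}$ is a sheaf if for every covering sieve $S$ on $x$ the restriction map $\mathrm{Nat}(\mathrm{Hom}(-,x),\mathfrak{F})\to\mathrm{Nat}(S,\mathfrak{F})$ is bijective. *)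

theory Defs
  imports "HOL-Algebra.Algebra" "HOL-Library.FuncSet" "HOL-Computational_Algebra.Primes"
begin

text \<open>An object G/H is represented by the subgroup H;
  its underlying G-set is the set of left cosets gH.\<close>

definition orb :: "('g, 'm) monoid_scheme \<Rightarrow> 'g set \<Rightarrow> 'g set set" where
  "orb G H = {g <#\<^bsub>G\<^esub> H | g. g \<in> carrier G}"

definition Gmap :: "('g, 'm) monoid_scheme \<Rightarrow> 'g set \<Rightarrow> 'g set \<Rightarrow> ('g set \<Rightarrow> 'g set) \<Rightarrow> bool" where
  "Gmap G H K phi \<longleftrightarrow> phi \<in> orb G H \<rightarrow>\<^sub>E orb G K \<and>
     (\<forall>g \<in> carrier G. \<forall>C \<in> orb G H. phi (g <#\<^bsub>G\<^esub> C) = g <#\<^bsub>G\<^esub> phi C)"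

type_synonym 'g omor = "'g set \<times> 'g set \<times> ('g set \<Rightarrow> 'g set)"

definition omor :: "('g, 'm) monoid_scheme \<Rightarrow> 'g omor set" where
  "omor G = {(H, K, phi). subgroup H G \<and> subgroup K G \<and> Gmap G H K phi}"

definition odom :: "'g omor \<Rightarrow> 'g set" where "odom m = fst m"
definition ocod :: "'g omor \<Rightarrow> 'g set" where "ocod m = fst (snd m)"

text \<open>ocomp G m h = m o h (first h, then m), assuming ocod h = odom m.\<close>
definition ocomp :: "('g, 'm) monoid_scheme \<Rightarrow> 'g omor \<Rightarrow> 'g omor \<Rightarrow> 'g omor" where
  "ocomp G m h = (odom h, ocod m, compose (orb G (odom h)) (snd (snd m)) (snd (snd h)))"

definition oid :: "('g, 'm) monoid_scheme \<Rightarrow> 'g set \<Rightarrow> 'g omor" where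
  "oid G H = (H, H, restrict id (orb G H))"

definition is_presheaf :: "('g, 'm) monoid_scheme \<Rightarrow> ('g set \<Rightarrow> 'b set) \<Rightarrow> ('g omor \<Rightarrow> 'b \<Rightarrow> 'b) \<Rightarrow> bool" where
  "is_presheaf G Fobj Fmor \<longleftrightarrow>
     (\<forall>m \<in> omor G. \<forall>a \<in> Fobj (ocod m). Fmor m a \<in> Fobj (odom m)) \<and>
     (\<forall>H. subgroup H G \<longrightarrow> (\<forall>a \<in> Fobj H. Fmor (oid G H) a = a)) \<and>
     (\<forall>m \<in> omor G. \<forall>h \<in> omor G. ocod h = odom m \<longrightarrow>
        (\<forall>a \<in> Fobj (ocod m). Fmor (ocomp G m h) a = Fmor h (Fmor m a)))"

definition is_sieve :: "('g, 'm) monoid_scheme \<Rightarrow> 'g set \<Rightarrow> 'g omor set \<Rightarrow> bool" where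
  "is_sieve G Y Sv \<longleftrightarrow> Sv \<subseteq> {m. m \<in> omor G \<and> ocod m = Y} \<and>
     (\<forall>m \<in> Sv. \<forall>h \<in> omor G. ocod h = odom m \<longrightarrow> ocomp G m h \<in> Sv)"

definition max_sieve :: "('g, 'm) monoid_scheme \<Rightarrow> 'g set \<Rightarrow> 'g omor set" where
  "max_sieve G Y = {m. m \<in> omor G \<and> ocod m = Y}"

text \<open>Natural transformations S => F, for S a sieve viewed as a subpresheaf of Hom(-,Y):
  a family alpha indexed by the elements of S, alpha m in F(dom m), natural.\<close>
definition nat_trans :: "('g, 'm) monoid_scheme \<Rightarrow> 'g omor set \<Rightarrow> ('g set \<Rightarrow> 'b set) \<Rightarrow> ('g omor \<Rightarrow> 'b \<Rightarrow> 'b)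
    \<Rightarrow> ('g omor \<Rightarrow> 'b) set" where
  "nat_trans G S Fobj Fmor = {alpha. alpha \<in> extensional S \<and>
     (\<forall>m \<in> S. alpha m \<in> Fobj (odom m)) \<and>
     (\<forall>m \<in> S. \<forall>h \<in> omor G. ocod h = odom m \<longrightarrow> alpha (ocomp G m h) = Fmor h (alpha m))}"

definition sylow_of :: "('g, 'm) monoid_scheme \<Rightarrow> nat \<Rightarrow> 'g set \<Rightarrow> 'g set \<Rightarrow> bool" where
  "sylow_of G p H P \<longleftrightarrow> subgroup P G \<and> P \<subseteq> H \<and> card P = p ^ multiplicity p (card H)"

definition proj :: "('g, 'm) monoid_scheme \<Rightarrow> 'g set \<Rightarrow> 'g set \<Rightarrow> 'g set \<Rightarrow> 'g set" where
  "proj G P H = (\<lambda>C \<in> orb G P. THE D. \<exists>g \<in> carrier G. C = g <#\<^bsub>G\<^esub> P \<and> D = g <#\<^bsub>G\<^esub> H)"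

definition sipp_covering :: "('g, 'm) monoid_scheme \<Rightarrow> nat \<Rightarrow> 'g set \<Rightarrow> 'g omor set \<Rightarrow> bool" where
  "sipp_covering G p H S \<longleftrightarrow> is_sieve G H S \<and>
     (\<exists>P. sylow_of G p H P \<and> (P, H, proj G P H) \<in> S)"

definition is_sheaf_sipp :: "('g, 'm) monoid_scheme \<Rightarrow> nat \<Rightarrow> ('g set \<Rightarrow> 'b set) \<Rightarrow> ('g omor \<Rightarrow> 'b \<Rightarrow> 'b) \<Rightarrow> bool" where
  "is_sheaf_sipp G p Fobj Fmor \<longleftrightarrow> is_presheaf G Fobj Fmor \<and>
     (\<forall>Y S. subgroup Y G \<longrightarrow> sipp_covering G p Y S \<longrightarrow>
        bij_betw (\<lambda>alpha. restrict alpha S) (nat_trans G (max_sieve G Y) Fobj Fmor) (nat_trans G S Fobj Fmor))"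

definition const_units_obj :: "'g set \<Rightarrow> 'k::field set" where
  "const_units_obj H = {x. x \<noteq> 0}"

definition const_units_mor :: "'g omor \<Rightarrow> 'k::field \<Rightarrow> 'k" where
  "const_units_mor m = id"

end

theory Submission
  imports Defs
begin

definition hmap :: "('g, 'm) monoid_scheme \<Rightarrow> 'g set \<Rightarrow> 'g \<Rightarrow> 'g set \<Rightarrow> 'g set" where
  "hmap G H a = (\<lambda>C \<in> orb G {\<one>\<^bsub>G\<^esub>}. C <#>\<^bsub>G\<^esub> (a <#\<^bsub>G\<^esub> H))"

context group begin

lemma orb1_elem: "C \<in> orb G {\<one>} \<Longrightarrow> \<exists>c\<in>carrier G. C = {c}"
  unfolding orb_def l_coset_def by auto

lemma orb1_mem: "c \<in> carrier G \<Longrightarrow> {c} \<in> orb G {\<one>}"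
  unfolding orb_def l_coset_def by (rule CollectI, rule exI[of _ c]) auto

lemma hmap_val: assumes "subgroup H G" "a \<in> carrier G" "c \<in> carrier G"
  shows "hmap G H a {c} = (c \<otimes> a) <# H"
proof -
  have "hmap G H a {c} = {c} <#> (a <# H)" using orb1_mem[OF assms(3)] by (simp add: hmap_def)
  also have "\<dots> = c <# (a <# H)" by (simp add: l_coset_eq_set_mult)
  also have "\<dots> = (c \<otimes> a) <# H" using lcos_m_assoc[OF subgroup.subset[OF assms(1)] assms(3) assms(2)] by simp
  finally show ?thesis .
qed

lemma orb_mem: "H \<subseteq> carrier G \<Longrightarrow> c \<in> carrier G \<Longrightarrow> c <# H \<in> orb G H"
  unfolding orb_def by blast

lemma hmap_omor: assumes "subgroup H G" "a \<in> carrier G"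
  shows "({\<one>}, H, hmap G H a) \<in> omor G"
proof -
  have HS: "H \<subseteq> carrier G" using assms subgroup.subset by blast
  have "hmap G H a \<in> orb G {\<one>} \<rightarrow>\<^sub>E orb G H"
  proof
    fix C assume "C \<in> orb G {\<one>}"
    then obtain c where c: "c \<in> carrier G" "C = {c}" using orb1_elem by blast
    show "hmap G H a C \<in> orb G H" using c hmap_val[OF assms c(1)] orb_mem[OF HS] assms by simp
  qed (simp add: hmap_def)
  moreover have "\<forall>g\<in>carrier G. \<forall>C\<in>orb G {\<one>}. hmap G H a (g <# C) = g <# hmap G H a C"
  proof (intro ballI)
    fix g C assume g: "g \<in> carrier G" and "C \<in> orb G {\<one>}"
    then obtain c where c: "c \<in> carrier G" "C = {c}" using orb1_elem by blast
    have "g <# C = {g \<otimes> c}" using c g by (simp add: l_coset_def)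
    then have "hmap G H a (g <# C) = (g \<otimes> c \<otimes> a) <# H" using hmap_val[OF assms] g c by simp
    also have "\<dots> = g <# ((c \<otimes> a) <# H)" using HS g c assms by (simp add: lcos_m_assoc m_assoc)
    finally show "hmap G H a (g <# C) = g <# hmap G H a C" using hmap_val[OF assms c(1)] c by simp
  qed
  ultimately show ?thesis unfolding omor_def Gmap_def using assms triv_subgroup by simp
qed

lemma key: assumes "(H, Y, phi) \<in> omor G"
  shows "\<exists>a\<in>carrier G. ocomp G (H, Y, phi) ({\<one>}, H, hmap G H a) = ({\<one>}, Y, hmap G Y \<one>)"
proof -
  have sH: "subgroup H G" and sY: "subgroup Y G" and gm: "Gmap G H Y phi" using assms by (auto simp: omor_def)
  have HS: "H \<subseteq> carrier G" and YS: "Y \<subseteq> carrier G" using sH sY subgroup.subset by blast+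
  have "H \<in> orb G H" using orb_mem[OF HS, of \<one>] HS by (simp add: lcos_mult_one)
  then have "phi H \<in> orb G Y" using gm by (auto simp: Gmap_def)
  then obtain b where b: "b \<in> carrier G" "phi H = b <# Y" unfolding orb_def by blast
  have eq: "phi (x <# H) = x <# phi H" if "x \<in> carrier G" for x
    using gm that \<open>H \<in> orb G H\<close> by (auto simp: Gmap_def)
  show ?thesis
  proof (intro bexI)
    show "inv b \<in> carrier G" using b by simp
    have "compose (orb G {\<one>}) phi (hmap G H (inv b)) = hmap G Y \<one>"
    proof (rule ext)
      fix C show "compose (orb G {\<one>}) phi (hmap G H (inv b)) C = hmap G Y \<one> C"
      proof (cases "C \<in> orb G {\<one>}")
        case True
        then obtain c where c: "c \<in> carrier G" "C = {c}" using orb1_elem by blast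
        have "compose (orb G {\<one>}) phi (hmap G H (inv b)) C = phi ((c \<otimes> inv b) <# H)"
          using True c hmap_val[OF sH, of "inv b" c] b by (simp add: compose_def)
        also have "\<dots> = (c \<otimes> inv b) <# (b <# Y)" using eq c b by simp
        also have "\<dots> = c <# Y" using c b YS by (simp add: lcos_m_assoc m_assoc)
        also have "\<dots> = hmap G Y \<one> C" using hmap_val[OF sY, of \<one> c] c by simp
        finally show ?thesis .
      next
        case False then show ?thesis by (simp add: compose_def hmap_def)
      qed
    qed
    then show "ocomp G (H, Y, phi) ({\<one>}, H, hmap G H (inv b)) = ({\<one>}, Y, hmap G Y \<one>)"
      by (simp add: ocomp_def odom_def ocod_def)
  qed
qed

lemma ocomp_omor: assumes "m \<in> omor G" "h \<in> omor G" "ocod h = odom m"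
  shows "ocomp G m h \<in> omor G"
proof -
  obtain H K phi where m: "m = (H, K, phi)" by (cases m) auto
  obtain A B psi where h: "h = (A, B, psi)" by (cases h) auto
  have B: "B = H" using assms(3) m h by (simp add: ocod_def odom_def)
  have g1: "Gmap G H K phi" and g2: "Gmap G A H psi" and s: "subgroup A G" "subgroup K G"
    using assms m h B by (auto simp: omor_def)
  have "Gmap G A K (compose (orb G A) phi psi)"
    unfolding Gmap_def
  proof (intro conjI ballI)
    show "compose (orb G A) phi psi \<in> orb G A \<rightarrow>\<^sub>E orb G K"
      using g1 g2 unfolding Gmap_def by (auto simp: compose_def)
  next
    fix g C assume g: "g \<in> carrier G" and C: "C \<in> orb G A"
    have "g <# C \<in> orb G A" using C g s(1) subgroup.subset[OF s(1)] unfolding orb_def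
      by (auto simp: lcos_m_assoc)
    moreover have "psi C \<in> orb G H" using g2 C by (auto simp: Gmap_def)
    ultimately show "compose (orb G A) phi psi (g <# C) = g <# compose (orb G A) phi psi C"
      using g1 g2 g C by (simp add: compose_def Gmap_def)
  qed
  then show ?thesis using assms m h B by (simp add: ocomp_def omor_def odom_def ocod_def)
qed

end
lemma (in group) E_in:
  assumes T: "is_sieve G Y T" and m: "m \<in> T"
  shows "({\<one>}, Y, hmap G Y \<one>) \<in> T"
proof -
  obtain H Y' phi where mm: "m = (H, Y', phi)" by (cases m) auto
  have "m \<in> omor G" "ocod m = Y" using T m by (auto simp: is_sieve_def)
  then have mo: "(H, Y, phi) \<in> omor G" and mm2: "m = (H, Y, phi)" using mm by (simp_all add: ocod_def)
  then have sH: "subgroup H G" by (simp add: omor_def)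
  obtain a where a: "a \<in> carrier G" "ocomp G (H, Y, phi) ({\<one>}, H, hmap G H a) = ({\<one>}, Y, hmap G Y \<one>)"
    using key[OF mo] by blast
  have ho: "({\<one>}, H, hmap G H a) \<in> omor G" using hmap_omor[OF sH a(1)] .
  have oc: "ocod ({\<one>}, H, hmap G H a) = odom m" using mm by (simp add: ocod_def odom_def)
  have "ocomp G m ({\<one>}, H, hmap G H a) \<in> T" using T m ho oc by (auto simp: is_sieve_def)
  then show ?thesis using a(2) mm2 by simp
qed

lemma (in group) const_lemma:
  assumes T: "is_sieve G Y T" and al: "alpha \<in> nat_trans G T Fobj const_units_mor" and m: "m \<in> T"
  shows "({\<one>}, Y, hmap G Y \<one>) \<in> T \<and> alpha m = alpha ({\<one>}, Y, hmap G Y \<one>)"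
proof -
  obtain H Y' phi where mm: "m = (H, Y', phi)" by (cases m) auto
  have "m \<in> omor G" "ocod m = Y" using T m by (auto simp: is_sieve_def)
  then have mo: "(H, Y, phi) \<in> omor G" using mm by (simp add: ocod_def)
  then have sH: "subgroup H G" by (simp add: omor_def)
  obtain a where a: "a \<in> carrier G" "ocomp G (H, Y, phi) ({\<one>}, H, hmap G H a) = ({\<one>}, Y, hmap G Y \<one>)"
    using key[OF mo] by blast
  have ho: "({\<one>}, H, hmap G H a) \<in> omor G" using hmap_omor[OF sH a(1)] .
  have oc: "ocod ({\<one>}, H, hmap G H a) = odom m" using mm by (simp add: ocod_def odom_def)
  have "ocomp G m ({\<one>}, H, hmap G H a) \<in> T" using T m ho oc by (auto simp: is_sieve_def)
  moreover have "alpha (ocomp G m ({\<one>}, H, hmap G H a)) = alpha m"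
    using al m ho oc by (auto simp: nat_trans_def const_units_mor_def)
  moreover have "m = (H, Y, phi)" using mm \<open>ocod m = Y\<close> by (simp add: ocod_def)
  ultimately show ?thesis using a(2) by simp
qed

lemma (in group) max_sieve_sieve: "is_sieve G Y (max_sieve G Y)"
  unfolding is_sieve_def max_sieve_def
  using ocomp_omor by (auto simp: ocomp_def ocod_def)

theorem proposition4p2p1:
  fixes G :: "('g, 'm) monoid_scheme"
  assumes "group G" and "finite (carrier G)"
    and "CHAR('k::field) dvd order G"
  shows "is_sheaf_sipp G CHAR('k) (const_units_obj :: 'g set \<Rightarrow> 'k set) const_units_mor"
proof -
  interpret group G by fact
  have pre: "is_presheaf G (const_units_obj :: 'g set \<Rightarrow> 'k set) const_units_mor"
    by (simp add: is_presheaf_def const_units_obj_def const_units_mor_def)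
  show ?thesis unfolding is_sheaf_sipp_def
  proof (intro conjI pre allI impI)
    fix Y S assume sY: "subgroup Y G" and cov: "sipp_covering G CHAR('k) Y S"
    define E where "E = ({\<one>\<^bsub>G\<^esub>}, Y, hmap G Y \<one>\<^bsub>G\<^esub>)"
    have sS: "is_sieve G Y S" using cov by (simp add: sipp_covering_def)
    obtain q where q: "q \<in> S" using cov unfolding sipp_covering_def by blast
    have Smax: "S \<subseteq> max_sieve G Y" using sS by (auto simp: is_sieve_def max_sieve_def)
    have sM: "is_sieve G Y (max_sieve G Y)" by (rule max_sieve_sieve)
    have ES: "E \<in> S" using E_in[OF sS q] E_def by simp
    have EM: "E \<in> max_sieve G Y" using ES Smax by blast
    have cS: "beta m = beta E" if "beta \<in> nat_trans G S const_units_obj const_units_mor" "m \<in> S" for beta m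
      using const_lemma[OF sS that] E_def by simp
    have cM: "beta m = beta E" if "beta \<in> nat_trans G (max_sieve G Y) const_units_obj const_units_mor" "m \<in> max_sieve G Y" for beta m
      using const_lemma[OF sM that] E_def by simp
    show "bij_betw (\<lambda>alpha. restrict alpha S) (nat_trans G (max_sieve G Y) (const_units_obj :: 'g set \<Rightarrow> 'k set) const_units_mor)
        (nat_trans G S const_units_obj const_units_mor)"
      unfolding bij_betw_def
    proof (intro conjI)
      show "inj_on (\<lambda>alpha. restrict alpha S) (nat_trans G (max_sieve G Y) (const_units_obj :: 'g set \<Rightarrow> 'k set) const_units_mor)"
      proof (rule inj_onI)
        fix a1 a2 :: "'g omor \<Rightarrow> 'k"
        assume a1: "a1 \<in> nat_trans G (max_sieve G Y) const_units_obj const_units_mor"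
          and a2: "a2 \<in> nat_trans G (max_sieve G Y) const_units_obj const_units_mor"
          and eq: "restrict a1 S = restrict a2 S"
        have "a1 E = a2 E" using eq ES by (metis restrict_apply')
        show "a1 = a2"
        proof (rule extensionalityI[of _ "max_sieve G Y"])
          show "a1 \<in> extensional (max_sieve G Y)" "a2 \<in> extensional (max_sieve G Y)"
            using a1 a2 by (auto simp: nat_trans_def)
        next
          fix m assume "m \<in> max_sieve G Y"
          then show "a1 m = a2 m" using cM[OF a1] cM[OF a2] \<open>a1 E = a2 E\<close> by simp
        qed
      qed
    next
      show "(\<lambda>alpha. restrict alpha S) ` nat_trans G (max_sieve G Y) (const_units_obj :: 'g set \<Rightarrow> 'k set) const_units_mor
          = nat_trans G S const_units_obj const_units_mor"
      proof (intro equalityI subsetI)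
        fix b assume "b \<in> (\<lambda>alpha. restrict alpha S) ` nat_trans G (max_sieve G Y) (const_units_obj :: 'g set \<Rightarrow> 'k set) const_units_mor"
        then obtain alpha where al: "alpha \<in> nat_trans G (max_sieve G Y) (const_units_obj :: 'g set \<Rightarrow> 'k set) const_units_mor"
          and b: "b = restrict alpha S" by blast
        show "b \<in> nat_trans G S const_units_obj const_units_mor"
          unfolding b nat_trans_def
          using al Smax sS unfolding nat_trans_def is_sieve_def by auto
      next
        fix b :: "'g omor \<Rightarrow> 'k" assume b: "b \<in> nat_trans G S const_units_obj const_units_mor"
        define alpha where "alpha = (\<lambda>m \<in> max_sieve G Y. b E)"
        have bE: "b E \<in> const_units_obj (odom E)" using b ES by (auto simp: nat_trans_def)
        have al: "alpha \<in> nat_trans G (max_sieve G Y) (const_units_obj :: 'g set \<Rightarrow> 'k set) const_units_mor"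
          unfolding nat_trans_def alpha_def
          using sM bE unfolding is_sieve_def by (auto simp: const_units_obj_def const_units_mor_def)
        have "restrict alpha S = b"
        proof (rule extensionalityI[of _ S])
          show "restrict alpha S \<in> extensional S" by simp
          show "b \<in> extensional S" using b by (auto simp: nat_trans_def)
        next
          fix m assume "m \<in> S"
          then show "restrict alpha S m = b m" using cS[OF b] Smax by (auto simp: alpha_def)
        qed
        then show "b \<in> (\<lambda>alpha. restrict alpha S) ` nat_trans G (max_sieve G Y) (const_units_obj :: 'g set \<Rightarrow> 'k set) const_units_mor"
          using al by blast
      qed
    qed
  qed
qed

end
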